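(* Let $n\ge3$, $k\ge1$ be integers, $\alpha=n/2-1$, let $b>0>c$ satisfy $$bc=-\frac{(k+1)k(\alpha+k-1)}{(2\alpha+k)(2\alpha+k-1)(\alpha+k+1)},\qquad b+c=-\frac{2\alpha(k+1)^2(\alpha+k-1)}{(2\alpha+k)(2\alpha+k-1)(\alpha+2k+1)},$$ and let $\beta_1<\dots<\beta_{k+1}$ be the zeros of $P_{k+1}^{(n)}(t)+bP_{k-1}^{(n)}(t)$. Then the polynomial $g_k(t)=(t-\beta_1)(t-\beta_2)\cdots(t-\beta_k)$ has all Gegenbauer coefficients positive, i.e. $g_k=\sum_{i=0}^kc_iP_i^{(n)}$ with $c_i>0$ for $i=0,\dots,k$.
   Context: $P_i^{(n)}$ is the Gegenbauer polynomial of degree $i$ (Jacobi polynomial with parameters $(n-3)/2,(n-3)/2$, normalized $P_i^{(n)}(1)=1$). *)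

theory Defs
  imports "HOL-Computational_Algebra.Polynomial"
begin

text \<open>Gegenbauer polynomial P_i^{(n)} of degree i, normalized by P_i^{(n)}(1) = 1
  (Jacobi polynomial with parameters ((n-3)/2,(n-3)/2), normalized at 1), given by the
  standard three-term recurrence
  P_0 = 1, P_1 = t, (i+n-2) P_{i+1}(t) = (2i+n-2) t P_i(t) - i P_{i-1}(t).\<close>
fun gegen :: "nat \<Rightarrow> nat \<Rightarrow> real poly" where
  "gegen n 0 = 1"
| "gegen n (Suc 0) = [:0, 1:]"
| "gegen n (Suc (Suc i)) =
     smult (1 / (real (Suc i) + real n - 2))
       (smult (2 * real (Suc i) + real n - 2) ([:0, 1:] * gegen n (Suc i))
        - smult (real (Suc i)) (gegen n i))"

end

theory Submission
  imports Defs
begin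

definition uu :: "nat \<Rightarrow> nat \<Rightarrow> real" where
  "uu n j = (real j + real n - 2) / (2 * real j + real n - 2)"
definition vv :: "nat \<Rightarrow> nat \<Rightarrow> real" where
  "vv n j = real j / (2 * real j + real n - 2)"

lemma uu_pos: "n \<ge> 3 \<Longrightarrow> uu n j > 0"
  unfolding uu_def by (intro divide_pos_pos) auto
lemma vv_pos: "n \<ge> 3 \<Longrightarrow> j \<ge> 1 \<Longrightarrow> vv n j > 0"
  unfolding vv_def by (intro divide_pos_pos) auto

lemma gegen_rec:
  assumes "n \<ge> 3"
  shows "x * poly (gegen n j) x = uu n j * poly (gegen n (Suc j)) x + vv n j * poly (gegen n (j - 1)) x"
proof (cases j)
  case 0
  have "real n - 2 \<noteq> 0" using assms by auto
  then show ?thesis using 0 by (simp add: uu_def vv_def)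
next
  case (Suc i)
  define s where "s = real (Suc i)"
  define P1 where "P1 = poly (gegen n (Suc i)) x"
  define P0 where "P0 = poly (gegen n i) x"
  have d1: "s + real n - 2 > 0" "2 * s + real n - 2 > 0" using assms by (auto simp: s_def)
  have e: "poly (gegen n (Suc (Suc i))) x = (1 / (s + real n - 2)) * ((2 * s + real n - 2) * (x * P1) - s * P0)"
    by (simp add: s_def P1_def P0_def del: of_nat_Suc)
  have gen: "x * P1 = D / E * ((1 / D) * (E * (x * P1) - s * P0)) + s / E * P0"
    if "D \<noteq> 0" "E \<noteq> 0" for D E :: real
    using that by (simp add: field_simps)
  have "x * P1 = uu n (Suc i) * poly (gegen n (Suc (Suc i))) x + vv n (Suc i) * P0"
    unfolding e uu_def vv_def s_def[symmetric] using d1 by (intro gen) auto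
  then show ?thesis using Suc by (simp add: P1_def P0_def)
qed

lemma X_mult_coeff: "coeff ([:0, 1:] * (p :: real poly)) (Suc j) = coeff p j" "coeff ([:0, 1:] * p) 0 = 0"
  by (auto simp add: coeff_pCons)

lemma gegen_coeff:
  assumes "n \<ge> 3"
  shows "coeff (gegen n i) i > 0 \<and> (\<forall>j>i. coeff (gegen n i) j = 0)"
  using assms
proof (induction n i rule: gegen.induct)
  case (1 n) then show ?case by (auto simp: coeff_1)
next
  case (2 n) then show ?case by (auto simp: coeff_pCons split: nat.splits)
next
  case (3 n i)
  have d1: "real (Suc i) + real n - 2 > 0" "2 * real (Suc i) + real n - 2 > 0" using 3 by auto
  have IH1: "coeff (gegen n (Suc i)) (Suc i) > 0" "\<And>j. j > Suc i \<Longrightarrow> coeff (gegen n (Suc i)) j = 0"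
    using 3 by auto
  have IH2: "\<And>j. j > i \<Longrightarrow> coeff (gegen n i) j = 0"
    using 3 by auto
  show ?case
  proof (intro conjI allI impI)
    show "coeff (gegen n (Suc (Suc i))) (Suc (Suc i)) > 0"
      using d1 IH1 IH2[of "Suc (Suc i)"] by (simp only: gegen.simps coeff_smult coeff_diff X_mult_coeff) simp
  next
    fix j assume "j > Suc (Suc i)"
    then obtain j' where j': "j = Suc j'" "j' > Suc i" by (cases j) auto
    then show "coeff (gegen n (Suc (Suc i))) j = 0"
      using IH1(2)[of j'] IH2[of j] by (simp only: gegen.simps coeff_smult coeff_diff X_mult_coeff) simp
  qed
qed

lemma gegen_degree: "n \<ge> 3 \<Longrightarrow> degree (gegen n i) = i"
  using gegen_coeff[of n i] by (intro antisym degree_le le_degree) auto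

lemma root_above:
  fixes p :: "real poly"
  assumes lc: "lead_coeff p > 0" and pz: "poly p z < 0"
  shows "\<exists>r>z. poly p r = 0 \<and> (\<forall>x>r. poly p x > 0)"
proof -
  have p0: "p \<noteq> 0" using lc by auto
  obtain N where N: "\<forall>x\<ge>N. poly p x \<ge> lead_coeff p" using poly_pinfty_gt_lc[OF lc] by blast
  have far: "\<exists>y>x. poly p y > 0" for x
  proof -
    have "poly p (max N x + 1) \<ge> lead_coeff p" using N by auto
    then show ?thesis using lc by (intro exI[of _ "max N x + 1"]) auto
  qed
  define R where "R = {x. poly p x = 0}"
  have finR: "finite R" unfolding R_def using poly_roots_finite[OF p0] .
  obtain y where y: "y > z" "poly p y > 0" using far by blast
  obtain w where w: "z < w" "w < y" "poly p w = 0" using poly_IVT_pos[OF y(1) pz y(2)] by blast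
  have wR: "w \<in> R" using w unfolding R_def by auto
  define r where "r = Max R"
  have rR: "r \<in> R" unfolding r_def using finR wR by (intro Max_in) auto
  have wr: "w \<le> r" unfolding r_def using finR wR by auto
  have "\<forall>x>r. poly p x > 0"
  proof (intro allI impI)
    fix x assume xr: "x > r"
    have ne: "poly p x \<noteq> 0"
    proof
      assume "poly p x = 0"
      then have "x \<in> R" unfolding R_def by auto
      then have "x \<le> r" unfolding r_def using finR by auto
      then show False using xr by auto
    qed
    show "poly p x > 0"
    proof (rule ccontr)
      assume "\<not> poly p x > 0"
      then have neg: "poly p x < 0" using ne by auto
      obtain y' where y': "y' > x" "poly p y' > 0" using far by blast
      obtain w' where w': "x < w'" "w' < y'" "poly p w' = 0" using poly_IVT_pos[OF y'(1) neg y'(2)] by blast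
      then have "w' \<in> R" unfolding R_def by auto
      then have "w' \<le> r" unfolding r_def using finR by auto
      then show False using w' xr by auto
    qed
  qed
  then show ?thesis using rR wr w unfolding R_def by (intro exI[of _ r]) auto
qed

lemma gegen_lead_pos: "n \<ge> 3 \<Longrightarrow> lead_coeff (gegen n i) > 0"
  using gegen_coeff[of n i] gegen_degree[of n i] by simp

lemma gegen_top_root:
  assumes "n \<ge> 3" "i \<ge> 1"
  shows "\<exists>z. poly (gegen n i) z = 0 \<and> (\<forall>x\<ge>z. \<forall>j<i. poly (gegen n j) x > 0) \<and> (\<forall>x>z. poly (gegen n i) x > 0)"
  using assms(2)
proof (induction i rule: nat_induct_at_least)
  case base
  show ?case by (intro exI[of _ 0]) auto
next
  case (Suc i)
  then obtain z where z: "poly (gegen n i) z = 0" "\<forall>x\<ge>z. \<forall>j<i. poly (gegen n j) x > 0"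
      "\<forall>x>z. poly (gegen n i) x > 0" by blast
  have pm: "poly (gegen n (i - 1)) z > 0" using z(2) Suc.hyps by auto
  have r: "z * poly (gegen n i) z = uu n i * poly (gegen n (Suc i)) z + vv n i * poly (gegen n (i - 1)) z"
    by (rule gegen_rec[OF assms(1)])
  have "vv n i * poly (gegen n (i - 1)) z > 0" using vv_pos[OF assms(1) Suc.hyps] pm by auto
  then have "uu n i * poly (gegen n (Suc i)) z < 0" using r z(1) by auto
  then have neg: "poly (gegen n (Suc i)) z < 0" using uu_pos[OF assms(1), of i]
    by (simp add: mult_less_0_iff)
  obtain r where r: "r > z" "poly (gegen n (Suc i)) r = 0" "\<forall>x>r. poly (gegen n (Suc i)) x > 0"
    using root_above[OF gegen_lead_pos[OF assms(1)] neg] by blast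
  show ?case
  proof (intro exI[of _ r] conjI allI impI)
    fix x j assume "x \<ge> r" "j < Suc i"
    then show "poly (gegen n j) x > 0" using z(2,3) r(1) by (cases "j = i") auto
  qed (use r in auto)
qed

fun mm :: "nat \<Rightarrow> nat \<Rightarrow> real" where
  "mm n 0 = 1"
| "mm n (Suc i) = mm n i * uu n i / vv n (Suc i)"

lemma mm_pos: "n \<ge> 3 \<Longrightarrow> mm n i > 0"
  by (induction i) (auto intro!: divide_pos_pos mult_pos_pos uu_pos vv_pos)

lemma CD:
  assumes "n \<ge> 3" "j \<ge> 1"
  shows "(x - y) * (\<Sum>i<j. mm n i * poly (gegen n i) y * poly (gegen n i) x) =
    mm n (j - 1) * uu n (j - 1) * (poly (gegen n (j - 1)) y * poly (gegen n j) x - poly (gegen n j) y * poly (gegen n (j - 1)) x)"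
  using assms(2)
proof (induction j rule: nat_induct_at_least)
  case base
  have "uu n 0 = 1" using assms(1) by (simp add: uu_def)
  then show ?case by (simp add: algebra_simps)
next
  case (Suc j)
  define S where "S = (\<Sum>i<j. mm n i * poly (gegen n i) y * poly (gegen n i) x)"
  define a where "a = mm n (j - 1) * uu n (j - 1)"
  define pjx where "pjx = poly (gegen n j) x"
  define pjy where "pjy = poly (gegen n j) y"
  define pmx where "pmx = poly (gegen n (j - 1)) x"
  define pmy where "pmy = poly (gegen n (j - 1)) y"
  define ppx where "ppx = poly (gegen n (Suc j)) x"
  define ppy where "ppy = poly (gegen n (Suc j)) y"
  have IH: "(x - y) * S = a * (pmy * pjx - pjy * pmx)"
    using Suc.IH unfolding S_def a_def pjx_def pjy_def pmx_def pmy_def .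
  have rx: "x * pjx = uu n j * ppx + vv n j * pmx" unfolding pjx_def ppx_def pmx_def by (rule gegen_rec[OF assms(1)])
  have ry: "y * pjy = uu n j * ppy + vv n j * pmy" unfolding pjy_def ppy_def pmy_def by (rule gegen_rec[OF assms(1)])
  have vj: "vv n j > 0" using vv_pos[OF assms(1) Suc.hyps] .
  obtain j' where j': "j = Suc j'" using Suc.hyps by (cases j) auto
  have am: "a = mm n j * vv n j" unfolding a_def using j' vj by simp
  have "(x - y) * (\<Sum>i<Suc j. mm n i * poly (gegen n i) y * poly (gegen n i) x)
      = (x - y) * S + mm n j * pjy * (x * pjx) - mm n j * pjx * (y * pjy)"
    unfolding S_def pjx_def pjy_def by (simp add: algebra_simps)
  also have "\<dots> = mm n j * vv n j * (pmy * pjx - pjy * pmx) + mm n j * pjy * (uu n j * ppx + vv n j * pmx)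
      - mm n j * pjx * (uu n j * ppy + vv n j * pmy)"
    unfolding IH rx ry am ..
  also have "\<dots> = mm n j * uu n j * (pjy * ppx - ppy * pjx)"
    by (simp add: algebra_simps)
  finally show ?case unfolding pjx_def pjy_def ppx_def ppy_def by simp
qed

lemma E_pos:
  fixes al kk :: real
  assumes "al \<ge> 1/2" "kk \<ge> 1"
  shows "kk * (2*al+kk-1) * (al+2*kk+1) * (al+kk+1) + 2*al*(kk+1)^2*(al+kk-1)*(al+kk+1)
     - (kk+1)*(al+kk-1)*(2*al+kk)*(al+2*kk+1) > 0"
proof -
  define a where "a = al - 1/2"
  define j where "j = kk - 1"
  have a: "a \<ge> 0" and j: "j \<ge> 0" using assms by (auto simp: a_def j_def)
  have al: "al = a + 1/2" and kk: "kk = j + 1" by (auto simp: a_def j_def)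
  have r: "0 \<le> (18) * (j ^ 1) + (69/4) * (j ^ 2) + (7) * (j ^ 3) + (1) * (j ^ 4) + (45/2) * (a ^ 1) + (54) * (a ^ 1 * j ^ 1) + (91/2) * (a ^ 1 * j ^ 2) + (16) * (a ^ 1 * j ^ 3) + (2) * (a ^ 1 * j ^ 4) + (21) * (a ^ 2) + (40) * (a ^ 2 * j ^ 1) + (23) * (a ^ 2 * j ^ 2) + (4) * (a ^ 2 * j ^ 3) + (6) * (a ^ 3) + (8) * (a ^ 3 * j ^ 1) + (2) * (a ^ 3 * j ^ 2)"
    using a j by (intro add_nonneg_nonneg mult_nonneg_nonneg zero_le_power) auto
  have "kk * (2*al+kk-1) * (al+2*kk+1) * (al+kk+1) + 2*al*(kk+1)^2*(al+kk-1)*(al+kk+1)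
     - (kk+1)*(al+kk-1)*(2*al+kk)*(al+2*kk+1) = 27/4 + ((18) * (j ^ 1) + (69/4) * (j ^ 2) + (7) * (j ^ 3) + (1) * (j ^ 4) + (45/2) * (a ^ 1) + (54) * (a ^ 1 * j ^ 1) + (91/2) * (a ^ 1 * j ^ 2) + (16) * (a ^ 1 * j ^ 3) + (2) * (a ^ 1 * j ^ 4) + (21) * (a ^ 2) + (40) * (a ^ 2 * j ^ 1) + (23) * (a ^ 2 * j ^ 2) + (4) * (a ^ 2 * j ^ 3) + (6) * (a ^ 3) + (8) * (a ^ 3 * j ^ 1) + (2) * (a ^ 3 * j ^ 2))"
    unfolding al kk by (simp add: field_simps power2_eq_square power3_eq_cube power4_eq_xxxx)
  then show ?thesis using r by linarith
qed

lemma b_bound: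
  fixes n k :: nat and b c \<alpha> :: real
  assumes n3: "n \<ge> 3" and k1: "k \<ge> 1"
    and al: "\<alpha> = real n / 2 - 1"
    and c0: "c < 0"
    and bc: "b * c = - ((real k + 1) * real k * (\<alpha> + real k - 1)) /
                  ((2 * \<alpha> + real k) * (2 * \<alpha> + real k - 1) * (\<alpha> + real k + 1))"
    and bpc: "b + c = - (2 * \<alpha> * (real k + 1)^2 * (\<alpha> + real k - 1)) /
                  ((2 * \<alpha> + real k) * (2 * \<alpha> + real k - 1) * (\<alpha> + 2 * real k + 1))"
  shows "b < vv n k / uu n k"
proof -
  have nn: "real n \<ge> 3" using n3 by simp
  have kk: "real k \<ge> 1" using k1 by simp
  have a12: "\<alpha> \<ge> 1/2" using al nn by simp
  have D1: "2 * \<alpha> + real k > 0" and D2: "2 * \<alpha> + real k - 1 > 0" and D3: "\<alpha> + real k + 1 > 0"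
    and D4: "\<alpha> + 2 * real k + 1 > 0" using a12 kk by auto
  define \<theta> where "\<theta> = real k / (2 * \<alpha> + real k)"
  have th: "vv n k / uu n k = \<theta>"
  proof -
    have rn: "real n = 2 * \<alpha> + 2" using al by simp
    have e1: "2 * real k + real n - 2 = 2 * real k + 2 * \<alpha>" and e2: "real k + real n - 2 = 2 * \<alpha> + real k"
      using rn by auto
    have p1: "2 * real k + 2 * \<alpha> > 0" using D1 kk by auto
    have g: "(x / z) / (y / z) = x / y" if "z \<noteq> 0" for x y z :: real
      using that by (cases "y = 0") (auto simp: divide_simps)
    show ?thesis unfolding vv_def uu_def \<theta>_def e1 e2 using p1 by (intro g) auto
  qed
  define E where "E = real k * (2*\<alpha>+real k-1) * (\<alpha>+2*real k+1) * (\<alpha>+real k+1)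
     + 2*\<alpha>*(real k+1)^2*(\<alpha>+real k-1)*(\<alpha>+real k+1)
     - (real k+1)*(\<alpha>+real k-1)*(2*\<alpha>+real k)*(\<alpha>+2*real k+1)"
  have Ep: "E > 0" unfolding E_def using E_pos[OF a12 kk] by simp
  have gen: "(K / X)^2 - (- (2 * A * (K + 1)^2 * V) / (X * Y * W)) * (K / X) + (- ((K + 1) * K * V) / (X * Y * Z))
     = K * (K * Y * W * Z + 2 * A * (K + 1)^2 * V * Z - (K + 1) * V * X * W) / (X^2 * Y * W * Z)"
    if "X \<noteq> 0" "Y \<noteq> 0" "Z \<noteq> 0" "W \<noteq> 0" for K X Y Z W V A :: real
    using that by (simp add: field_simps power2_eq_square)
  have key: "\<theta>^2 - (b + c) * \<theta> + b * c = real k * E /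
      ((2 * \<alpha> + real k)^2 * (2 * \<alpha> + real k - 1) * (\<alpha> + 2 * real k + 1) * (\<alpha> + real k + 1))"
    unfolding bpc bc \<theta>_def E_def using D1 D2 D3 D4
    by (subst gen) auto
  have "real k * E /
      ((2 * \<alpha> + real k)^2 * (2 * \<alpha> + real k - 1) * (\<alpha> + 2 * real k + 1) * (\<alpha> + real k + 1)) > 0"
    using Ep kk D1 D2 D3 D4 by (intro divide_pos_pos mult_pos_pos) auto
  then have "(\<theta> - b) * (\<theta> - c) > 0" using key by (simp add: algebra_simps power2_eq_square)
  moreover have "\<theta> - c > 0" unfolding \<theta>_def using c0 kk D1 by (smt (verit) divide_pos_pos)
  ultimately have "\<theta> - b > 0" by (simp add: zero_less_mult_iff)
  then show ?thesis using th by simp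
qed

lemma final_alg:
  fixes x y S A w pk pkx pmx pmy p1x p1y b uu vv l C :: real
  assumes w: "vv = w + b * uu" and w0: "w \<noteq> 0" and l0: "l \<noteq> 0"
    and C: "C = (A / w) * pk * uu * l" and C0: "C \<noteq> 0"
    and cd: "(x - y) * S = A * (pmy * pkx - pk * pmx)"
    and rx: "x * pkx = uu * p1x + vv * pmx" and ry: "y * pk = uu * p1y + vv * pmy"
    and p1y: "p1y = - b * pmy"
  shows "(p1x + b * pmx) / l = (x - y) * ((1 / C) * (S + (A / w) * pk * pkx))"
proof -
  have "(x - y) * (S + (A / w) * pk * pkx) = (x - y) * S + (A / w) * pk * (x * pkx) - (A / w) * pkx * (y * pk)"
    using w0 by (simp add: field_simps)
  also have "\<dots> = A * (pmy * pkx - pk * pmx) + (A / w) * pk * (uu * p1x + (w + b * uu) * pmx)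
      - (A / w) * pkx * (uu * (- b * pmy) + (w + b * uu) * pmy)"
    unfolding cd rx ry p1y w ..
  also have "\<dots> = (A / w) * pk * uu * (p1x + b * pmx)"
    using w0 by (simp add: field_simps)
  finally have e: "(x - y) * (S + (A / w) * pk * pkx) = (A / w) * pk * uu * (p1x + b * pmx)" .
  have "(x - y) * ((1 / C) * (S + (A / w) * pk * pkx)) = ((x - y) * (S + (A / w) * pk * pkx)) / C"
    by simp
  also have "\<dots> = (A / w) * pk * uu * (p1x + b * pmx) / ((A / w) * pk * uu * l)" unfolding e C ..
  also have "\<dots> = (p1x + b * pmx) / l" using C0 C by simp
  finally show ?thesis by simp
qed

theorem lemma4p13:
  fixes n k :: nat and b c \<alpha> :: real and \<beta> :: "nat \<Rightarrow> real"
  assumes "n \<ge> 3" and "k \<ge> 1"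
    and "\<alpha> = real n / 2 - 1"
    and "b > 0" and "c < 0"
    and "b * c = - ((real k + 1) * real k * (\<alpha> + real k - 1)) /
                  ((2 * \<alpha> + real k) * (2 * \<alpha> + real k - 1) * (\<alpha> + real k + 1))"
    and "b + c = - (2 * \<alpha> * (real k + 1)^2 * (\<alpha> + real k - 1)) /
                  ((2 * \<alpha> + real k) * (2 * \<alpha> + real k - 1) * (\<alpha> + 2 * real k + 1))"
    and "strict_mono_on {1..k+1} \<beta>"
    and "{t. poly (gegen n (k + 1) + smult b (gegen n (k - 1))) t = 0} = \<beta> ` {1..k+1}"
  shows "\<exists>cs :: nat \<Rightarrow> real. (\<forall>i\<le>k. cs i > 0) \<and>
           (\<Prod>j=1..k. [:- \<beta> j, 1:]) = (\<Sum>i\<le>k. smult (cs i) (gegen n i))"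
proof -
  note n3 = assms(1) and k1 = assms(2) and mono = assms(8) and roots = assms(9)
  define P where "P = gegen n"
  define f where "f = gegen n (k + 1) + smult b (gegen n (k - 1))"
  define l where "l = coeff (gegen n (k + 1)) (k + 1)"
  define y where "y = \<beta> (k + 1)"
  have bb: "b < vv n k / uu n k" using b_bound[OF assms(1,2,3,5,6,7)] .
  have uk: "uu n k > 0" using uu_pos[OF n3] .
  have vk: "vv n k > 0" using vv_pos[OF n3 k1] .
  define w where "w = vv n k - b * uu n k"
  have wpos: "w > 0" unfolding w_def using bb uk by (simp add: field_simps)
  have lpos: "l > 0" unfolding l_def using gegen_coeff[OF n3, of "k+1"] by auto
  have cf: "coeff f (k + 1) = l" and cf0: "\<forall>j>k+1. coeff f j = 0"
    unfolding f_def l_def using gegen_coeff[OF n3, of "k+1"] gegen_coeff[OF n3, of "k-1"] k1 by auto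
  have degf: "degree f = k + 1" using cf cf0 lpos by (intro antisym degree_le le_degree) auto
  define Q where "Q = (\<Prod>j=1..k+1. [:- \<beta> j, 1:])"
  have degQ: "degree Q = k + 1" unfolding Q_def by (subst degree_prod_eq_sum_degree) auto
  have lcQ: "lead_coeff Q = 1" unfolding Q_def lead_coeff_prod by simp
  have inj: "inj_on \<beta> {1..k+1}" using mono by (rule strict_mono_on_imp_inj_on)
  have cardA: "card (\<beta> ` {1..k+1}) = k + 1" using card_image[OF inj] by simp
  have fQ: "f = smult l Q"
  proof (rule poly_eqI_degree_lead_coeff[where n = "k+1" and A = "\<beta> ` {1..k+1}"])
    show "coeff f (k + 1) = coeff (smult l Q) (k + 1)" using cf lcQ degQ by simp
    show "k + 1 \<le> card (\<beta> ` {1..k+1})" using cardA by simp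
    show "degree f \<le> k + 1" using degf by simp
    show "degree (smult l Q) \<le> k + 1" using degQ by simp
    fix z assume z: "z \<in> \<beta> ` {1..k+1}"
    then have "poly f z = 0" using roots unfolding f_def by blast
    moreover from z obtain j where j: "j \<in> {1..k+1}" "z = \<beta> j" by blast
    have "poly Q z = 0" unfolding Q_def poly_prod using j by (intro prod_zero) auto
    ultimately show "poly f z = poly (smult l Q) z" by simp
  qed
  have Qsplit: "Q = (\<Prod>j=1..k. [:- \<beta> j, 1:]) * [:- y, 1:]"
  proof -
    have "{1..k+1} = insert (k+1) {1..k}" by auto
    then show ?thesis unfolding Q_def y_def by simp
  qed
  obtain z where z: "poly (gegen n k) z = 0" "\<forall>x\<ge>z. \<forall>j<k. poly (gegen n j) x > 0"
      "\<forall>x>z. poly (gegen n k) x > 0" using gegen_top_root[OF n3 k1] by blast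
  have fz: "poly f z < 0"
  proof -
    have r: "z * poly (gegen n k) z = uu n k * poly (gegen n (Suc k)) z + vv n k * poly (gegen n (k - 1)) z"
      by (rule gegen_rec[OF n3])
    have pm: "poly (gegen n (k - 1)) z > 0" using z(2) k1 by auto
    have e: "poly (gegen n (Suc k)) z = - (vv n k / uu n k) * poly (gegen n (k - 1)) z"
      using r z(1) uk by (simp add: field_simps)
    have "poly f z = (b - vv n k / uu n k) * poly (gegen n (k - 1)) z"
      unfolding f_def using e by (simp add: algebra_simps)
    also have "\<dots> < 0" using bb pm by (simp add: mult_neg_pos)
    finally show ?thesis .
  qed
  have lcf: "lead_coeff f > 0" using degf cf lpos by simp
  obtain r where r: "r > z" "poly f r = 0" using root_above[OF lcf fz] by blast
  then have "r \<in> \<beta> ` {1..k+1}" using roots unfolding f_def by blast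
  then obtain m where m: "m \<in> {1..k+1}" "r = \<beta> m" by blast
  have "\<beta> m \<le> y"
  proof (cases "m = k + 1")
    case False
    then have "\<beta> m < \<beta> (k + 1)" using m(1)
      by (intro mono[unfolded strict_mono_on_def, rule_format]) auto
    then show ?thesis by (simp add: y_def)
  qed (simp add: y_def)
  then have yz: "y > z" using r m by simp
  have Ppos: "poly (gegen n j) y > 0" if "j \<le> k" for j
    using z(2,3) yz that by (cases "j = k") auto
  have fy: "poly f y = 0" using roots unfolding f_def y_def by auto
  define A where "A = mm n (k - 1) * uu n (k - 1)"
  have Apos: "A > 0" unfolding A_def using mm_pos[OF n3] uu_pos[OF n3] by (simp add: mult_pos_pos)
  define pk where "pk = poly (gegen n k) y"
  have pkpos: "pk > 0" unfolding pk_def using Ppos by simp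
  define C where "C = (A / w) * pk * uu n k * l"
  have Cpos: "C > 0" unfolding C_def using Apos wpos pkpos uk lpos by simp
  define cs where "cs i = (if i < k then mm n i * poly (gegen n i) y / C else (A / w) * pk / C)" for i
  have cspos: "\<forall>i\<le>k. cs i > 0"
    unfolding cs_def using mm_pos[OF n3] Ppos Cpos Apos wpos pkpos by (auto intro!: divide_pos_pos mult_pos_pos)
  define G where "G = (\<Prod>j=1..k. [:- \<beta> j, 1:])"
  define H where "H = (\<Sum>i\<le>k. smult (cs i) (gegen n i))"
  have "[:- y, 1:] * G = [:- y, 1:] * H"
  proof (rule poly_ext)
    fix x
    have "poly f x = l * ((x - y) * poly G x)"
      using fQ Qsplit unfolding G_def by (simp add: algebra_simps)
    then have e1: "poly f x / l = (x - y) * poly G x" using lpos by simp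
    have e2: "poly ([:- y, 1:] * G) x = (x - y) * poly G x" by (simp add: algebra_simps)
    have lhs: "poly ([:- y, 1:] * G) x = poly f x / l" using e1 e2 by simp
    have sumk: "{..k} = insert k {..<k}" by auto
    have "poly H x = (\<Sum>i<k. cs i * poly (gegen n i) x) + cs k * poly (gegen n k) x"
      unfolding H_def poly_sum sumk by simp
    also have "\<dots> = (1 / C) * ((\<Sum>i<k. mm n i * poly (gegen n i) y * poly (gegen n i) x) + (A / w) * pk * poly (gegen n k) x)"
      unfolding cs_def by (simp add: sum_distrib_left sum_divide_distrib algebra_simps)
    finally have Hx: "poly H x = \<dots>" .
    have cd: "(x - y) * (\<Sum>i<k. mm n i * poly (gegen n i) y * poly (gegen n i) x) =
      A * (poly (gegen n (k - 1)) y * poly (gegen n k) x - pk * poly (gegen n (k - 1)) x)"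
      unfolding A_def pk_def using CD[OF n3 k1] .
    have rx: "x * poly (gegen n k) x = uu n k * poly (gegen n (Suc k)) x + vv n k * poly (gegen n (k - 1)) x"
      by (rule gegen_rec[OF n3])
    have ry: "y * pk = uu n k * poly (gegen n (Suc k)) y + vv n k * poly (gegen n (k - 1)) y"
      unfolding pk_def by (rule gegen_rec[OF n3])
    have fy': "poly (gegen n (Suc k)) y = - b * poly (gegen n (k - 1)) y"
      using fy unfolding f_def by simp
    have fx: "poly f x = poly (gegen n (Suc k)) x + b * poly (gegen n (k - 1)) x"
      unfolding f_def by simp
    show "poly ([:- y, 1:] * G) x = poly ([:- y, 1:] * H) x"
    proof -
      have e3: "poly ([:- y, 1:] * H) x = (x - y) * poly H x" by (simp add: algebra_simps)
      have "poly f x / l = (x - y) * poly H x"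
        unfolding Hx fx
        by (rule final_alg[OF _ _ _ _ _ cd rx ry fy']) (use wpos lpos Cpos in \<open>auto simp: w_def C_def\<close>)
      then show ?thesis using lhs e3 by simp
    qed
  qed
  moreover have "[:- y, 1:] \<noteq> 0" by simp
  ultimately have "G = H" by (simp only: mult_cancel_left) simp
  then show ?thesis using cspos unfolding G_def H_def by blast
qed

end
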